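(* Suppose the GAPs lie in $\mathbf{Q}^+$. Then in the Com-IC model, for any fixed seed sets $S_\mathcal{A},S_\mathcal{B}$, $\sigma_\mathcal{A}(S_\mathcal{A},S_\mathcal{B})$ is monotonically non-decreasing in each of $q_{\mathcal{A}|\emptyset},q_{\mathcal{A}|\mathcal{B}},q_{\mathcal{B}|\emptyset},q_{\mathcal{B}|\mathcal{A}}$ when the other three GAPs are held fixed, as long as the modified GAP vector still lies in $\mathbf{Q}^+$.
   Context: Com-IC model. Let $G=(V,E,p)$ be a directed graph with $p:E\to[0,1]$ and $N^-(v)$ the in-neighbours of $v$. Two items $\mathcal{A},\mathcal{B}$; GAPs $\mathbf{Q}=(q_{\mathcal{A}|\emptyset},q_{\mathcal{A}|\mathcal{B}},q_{\mathcal{B}|\emptyset},q_{\mathcal{B}|\mathcal{A}})\in[0,1]^4$. Given seed sets $S_\mathcal{A},S_\mathcal{B}\subseteq V$, randomness: each edge $(u,v)$ independently live w.p. $p(u,v)$; each node $v$ independently draws $\alpha^v_\mathcal{A},\alpha^v_\mathcal{B}$ uniform on $[0,1]$, a uniformly random permutation $\pi_v$ of $N^-(v)$, and a fair coin $\tau_v\in\{\mathcal{A},\mathcal{B}\}$. For each item $X$ each node is $X$-idle, $X$-suspended, $X$-adopted or $X$-rejected; initially all idle. At step $0$ nodes of $S_\mathcal{A}$ become $\mathcal{A}$-adopted and nodes of $S_\mathcal{B}$ become $\mathcal{B}$-adopted (order for nodes in both given by $\tau_v$). At step $t\ge1$, $v$ is informed of $X$ by in-neighbour $u$ if $(u,v)$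 is live and $u$ adopted $X$ at step $t-1$; informing in-neighbours are processed in order $\pi_v$ (an in-neighbour that adopted both items is processed for both, in its adoption order). When $v$ is informed of $X$ ($Y$ the other item) while $X$-idle: if $Y$-adopted, $v$ becomes $X$-adopted if $\alpha^v_X\le q_{X|Y}$, else $X$-rejected; otherwise $X$-adopted if $\alpha^v_X\le q_{X|\emptyset}$, else $X$-suspended. Informing a non-$X$-idle node of $X$ has no effect. Reconsideration: when an $X$-suspended node becomes $Y$-adopted, it becomes $X$-adopted if $\alpha^v_X\le q_{X|Y}$, else $X$-rejected. The process stops when nothing changes. $\sigma_\mathcal{A}(S_\mathcal{A},S_\mathcal{B})$ is the expected final number of $\mathcal{A}$-adopted nodes. $\mathbf{Q}^+$: $q_{\mathcal{A}|\emptyset}\le q_{\mathcal{A}|\mathcal{B}}$ and $q_{\mathcal{B}|\emptyset}\le q_{\mathcal{B}|\mathcal{A}}$. *)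

theory Defs
  imports "HOL-Probability.Probability" "HOL-Combinatorics.Multiset_Permutations"
begin

datatype item = IA | IB

datatype status = Idle | Suspended | Adopted | Rejected

fun other :: "item \<Rightarrow> item" where
  "other IA = IB" | "other IB = IA"

datatype gap = QA0 | QAB | QB0 | QBA

type_synonym gaps = "gap \<Rightarrow> real"

fun q0 :: "gaps \<Rightarrow> item \<Rightarrow> real" where
  "q0 Q IA = Q QA0" | "q0 Q IB = Q QB0"

fun q1 :: "gaps \<Rightarrow> item \<Rightarrow> real" where
  "q1 Q IA = Q QAB" | "q1 Q IB = Q QBA"

definition valid_gaps :: "gaps \<Rightarrow> bool" where
  "valid_gaps Q \<longleftrightarrow> (\<forall>i. 0 \<le> Q i \<and> Q i \<le> 1)"

definition Qplus :: "gaps \<Rightarrow> bool" where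
  "Qplus Q \<longleftrightarrow> Q QA0 \<le> Q QAB \<and> Q QB0 \<le> Q QBA"

definition in_nbrs :: "('v \<times> 'v) set \<Rightarrow> 'v \<Rightarrow> 'v set" where
  "in_nbrs E v = {u. (u, v) \<in> E}"

text \<open>A possible world: (alpha_A, alpha_B, live edges, permutations pi_v, coins tau_v).\<close>
type_synonym 'v world =
  "('v \<Rightarrow> real) \<times> ('v \<Rightarrow> real) \<times> ('v \<times> 'v \<Rightarrow> bool) \<times> ('v \<Rightarrow> 'v list) \<times> ('v \<Rightarrow> item)"

definition w_alpha :: "'v world \<Rightarrow> 'v \<Rightarrow> item \<Rightarrow> real" where
  "w_alpha w v X = (if X = IA then fst w v else fst (snd w) v)"

definition w_live :: "'v world \<Rightarrow> 'v \<times> 'v \<Rightarrow> bool" where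
  "w_live w = fst (snd (snd w))"

definition w_perm :: "'v world \<Rightarrow> 'v \<Rightarrow> 'v list" where
  "w_perm w = fst (snd (snd (snd w)))"

definition w_coin :: "'v world \<Rightarrow> 'v \<Rightarrow> item" where
  "w_coin w = snd (snd (snd (snd w)))"

text \<open>Node-local state: status for each item, together with the list of items the node
  adopted in the current step (in adoption order).\<close>
type_synonym nstate = "(item \<Rightarrow> status) \<times> item list"

definition inform :: "gaps \<Rightarrow> (item \<Rightarrow> real) \<Rightarrow> item \<Rightarrow> nstate \<Rightarrow> nstate" where
  "inform Q a X sa = (case sa of (s, acc) \<Rightarrow>
     (let Y = other X in
      if s X \<noteq> Idle then (s, acc)
      else if s Y = Adopted then
        (if a X \<le> q1 Q X then (s(X := Adopted), acc @ [X]) else (s(X := Rejected), acc))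
      else if a X \<le> q0 Q X then
        (if s Y = Suspended then
           (if a Y \<le> q1 Q Y then (s(X := Adopted, Y := Adopted), acc @ [X, Y])
            else (s(X := Adopted, Y := Rejected), acc @ [X]))
         else (s(X := Adopted), acc @ [X]))
      else (s(X := Suspended), acc)))"

text \<open>Global state: statuses of all nodes, and items adopted by each node in the last step.\<close>
type_synonym 'v gstate = "('v \<Rightarrow> item \<Rightarrow> status) \<times> ('v \<Rightarrow> item list)"

definition init_state :: "'v set \<Rightarrow> 'v set \<Rightarrow> 'v world \<Rightarrow> 'v gstate" where
  "init_state SA SB w =
     ((\<lambda>v X. if (X = IA \<and> v \<in> SA) \<or> (X = IB \<and> v \<in> SB) then Adopted else Idle),
      (\<lambda>v. if v \<in> SA \<and> v \<in> SB then [w_coin w v, other (w_coin w v)]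
           else if v \<in> SA then [IA] else if v \<in> SB then [IB] else []))"

definition events :: "'v world \<Rightarrow> ('v \<Rightarrow> item list) \<Rightarrow> 'v \<Rightarrow> item list" where
  "events w nw v = concat (map (\<lambda>u. if w_live w (u, v) then nw u else []) (w_perm w v))"

definition step :: "gaps \<Rightarrow> 'v world \<Rightarrow> 'v gstate \<Rightarrow> 'v gstate" where
  "step Q w g = (case g of (st, nw) \<Rightarrow>
     (let r = (\<lambda>v. fold (inform Q (w_alpha w v)) (events w nw v) (st v, [])) in
      ((\<lambda>v. fst (r v)), (\<lambda>v. snd (r v)))))"

fun run :: "gaps \<Rightarrow> 'v set \<Rightarrow> 'v set \<Rightarrow> 'v world \<Rightarrow> nat \<Rightarrow> 'v gstate" where
  "run Q SA SB w 0 = init_state SA SB w"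
| "run Q SA SB w (Suc t) = step Q w (run Q SA SB w t)"

text \<open>Adoption is absorbing, so the final set of A-adopted nodes is the set of nodes
  that are A-adopted at some step.\<close>
definition adoptedA :: "gaps \<Rightarrow> 'v set \<Rightarrow> 'v set \<Rightarrow> 'v world \<Rightarrow> 'v set" where
  "adoptedA Q SA SB w = {v. \<exists>t. fst (run Q SA SB w t) v IA = Adopted}"

definition world_measure :: "('v \<times> 'v) set \<Rightarrow> ('v \<times> 'v \<Rightarrow> real) \<Rightarrow> 'v world measure" where
  "world_measure E p =
     (PiM UNIV (\<lambda>v. uniform_measure lborel {0..1::real})) \<Otimes>\<^sub>M
     (PiM UNIV (\<lambda>v. uniform_measure lborel {0..1::real})) \<Otimes>\<^sub>M
     (PiM UNIV (\<lambda>e. measure_pmf (bernoulli_pmf (if e \<in> E then p e else 0)))) \<Otimes>\<^sub>M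
     (PiM UNIV (\<lambda>v. measure_pmf (pmf_of_set (permutations_of_set (in_nbrs E v))))) \<Otimes>\<^sub>M
     (PiM UNIV (\<lambda>v. measure_pmf (pmf_of_set {IA, IB})))"

definition sigmaA :: "('v::finite \<times> 'v) set \<Rightarrow> ('v \<times> 'v \<Rightarrow> real) \<Rightarrow> gaps \<Rightarrow> 'v set \<Rightarrow> 'v set \<Rightarrow> real" where
  "sigmaA E p Q SA SB = (\<integral>w. real (card (adoptedA Q SA SB w)) \<partial>world_measure E p)"

end

theory Submission
  imports Defs "HOL-Library.Countable"
begin

lemma other_other[simp]: "other (other X) = X" by (cases X) auto
lemma other_neq[simp]: "other X \<noteq> X" "X \<noteq> other X" by (cases X; simp)+

lemma item_cases2: "Z = X \<or> Z = other X" by (cases Z; cases X) auto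

lemma inform_mono_adopted:
  "s Z = Adopted \<Longrightarrow> fst (inform Q a X (s, acc)) Z = Adopted"
  unfolding inform_def Let_def by auto

lemma inform_mono_nonidle:
  "s Z \<noteq> Idle \<Longrightarrow> fst (inform Q a X (s, acc)) Z \<noteq> Idle"
  unfolding inform_def Let_def by auto

lemma inform_X: "fst (inform Q a X (s, acc)) X \<noteq> Idle"
  unfolding inform_def Let_def by auto

lemma inform_idle: "s Z = Idle \<Longrightarrow> Z \<noteq> X \<Longrightarrow> fst (inform Q a X (s, acc)) Z = Idle"
  unfolding inform_def Let_def by auto

lemma inform_acc:
  "\<exists>new. snd (inform Q a X (s, acc)) = acc @ new \<and>
     (\<forall>Z. Z \<in> set new \<longleftrightarrow> (fst (inform Q a X (s, acc)) Z = Adopted \<and> s Z \<noteq> Adopted))"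
  using item_cases2[of _ X]
  unfolding inform_def Let_def by (auto split: if_splits)

definition ninv :: "gaps \<Rightarrow> (item \<Rightarrow> real) \<Rightarrow> (item \<Rightarrow> bool) \<Rightarrow> (item \<Rightarrow> status) \<Rightarrow> bool" where
  "ninv Q a sx s \<longleftrightarrow> (\<forall>X.
     \<not> (s X = Suspended \<and> s (other X) = Adopted) \<and>
     (s X = Rejected \<longrightarrow> a X > q1 Q X) \<and>
     (s X = Suspended \<longrightarrow> a X > q0 Q X) \<and>
     (s X = Adopted \<longrightarrow> sx X \<or> a X \<le> q1 Q X) \<and>
     (s X = Adopted \<and> \<not> sx X \<and> a X > q0 Q X \<longrightarrow>
        s (other X) = Adopted \<and> (sx (other X) \<or> a (other X) \<le> q0 Q (other X))))"

lemma q01: "Qplus Q \<Longrightarrow> q0 Q X \<le> q1 Q X"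
  by (cases X) (auto simp: Qplus_def)

lemma all_item: "(\<forall>X. P X) \<longleftrightarrow> P IA \<and> P IB"
  by (metis item.exhaust)

lemma inform_inv:
  assumes "ninv Q a sx s" "Qplus Q"
  shows "ninv Q a sx (fst (inform Q a X (s, acc)))"
proof -
  have qq: "\<And>Z. q0 Q Z \<le> q1 Q Z" using q01[OF assms(2)] .
  show ?thesis
    using assms(1) qq[of IA] qq[of IB]
    unfolding ninv_def inform_def Let_def all_item
    by (cases X; cases "s IA"; cases "s IB"; simp; linarith?)
qed


lemma fold_mono_adopted:
  "s Z = Adopted \<Longrightarrow> fst (fold (inform Q a) xs (s, acc)) Z = Adopted"
proof (induction xs arbitrary: s acc)
  case (Cons x xs)
  then show ?case using inform_mono_adopted[of s Z Q a x acc]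
    by (cases "inform Q a x (s, acc)") auto
qed simp

lemma fold_mono_nonidle:
  "s Z \<noteq> Idle \<Longrightarrow> fst (fold (inform Q a) xs (s, acc)) Z \<noteq> Idle"
proof (induction xs arbitrary: s acc)
  case (Cons x xs)
  then show ?case using inform_mono_nonidle[of s Z Q a x acc]
    by (cases "inform Q a x (s, acc)") auto
qed simp

lemma fold_informed:
  "X \<in> set xs \<Longrightarrow> fst (fold (inform Q a) xs (s, acc)) X \<noteq> Idle"
proof (induction xs arbitrary: s acc)
  case (Cons x xs)
  show ?case
  proof (cases "X = x")
    case True
    then show ?thesis using inform_X[of Q a x s acc] fold_mono_nonidle
      by (cases "inform Q a x (s, acc)") auto
  next
    case False
    then show ?thesis using Cons by (cases "inform Q a x (s, acc)") auto
  qed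
qed simp

lemma fold_idle:
  "s Z = Idle \<Longrightarrow> Z \<notin> set xs \<Longrightarrow> fst (fold (inform Q a) xs (s, acc)) Z = Idle"
proof (induction xs arbitrary: s acc)
  case (Cons x xs)
  then show ?case using inform_idle[of s Z x Q a acc]
    by (cases "inform Q a x (s, acc)") auto
qed simp

lemma fold_inv:
  "ninv Q a sx s \<Longrightarrow> Qplus Q \<Longrightarrow> ninv Q a sx (fst (fold (inform Q a) xs (s, acc)))"
proof (induction xs arbitrary: s acc)
  case (Cons x xs)
  then show ?case using inform_inv[of Q a sx s x acc]
    by (cases "inform Q a x (s, acc)") auto
qed simp

lemma fold_acc_grow:
  "set acc \<subseteq> set (snd (fold (inform Q a) xs (s, acc)))"
proof (induction xs arbitrary: s acc)
  case (Cons x xs)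
  obtain new where "snd (inform Q a x (s, acc)) = acc @ new" using inform_acc by blast
  then show ?case using Cons[where s="fst (inform Q a x (s, acc))" and acc="snd (inform Q a x (s, acc))"]
    by (cases "inform Q a x (s, acc)") auto
qed simp

lemma fold_acc_adopted:
  "\<forall>Z\<in>set acc. s Z = Adopted \<Longrightarrow>
   \<forall>Z\<in>set (snd (fold (inform Q a) xs (s, acc))). fst (fold (inform Q a) xs (s, acc)) Z = Adopted"
proof (induction xs arbitrary: s acc)
  case (Cons x xs)
  obtain new where n: "snd (inform Q a x (s, acc)) = acc @ new"
    "\<forall>Z. Z \<in> set new \<longleftrightarrow> (fst (inform Q a x (s, acc)) Z = Adopted \<and> s Z \<noteq> Adopted)"
    using inform_acc by blast
  have "\<forall>Z\<in>set (snd (inform Q a x (s, acc))). fst (inform Q a x (s, acc)) Z = Adopted"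
    using n Cons.prems inform_mono_adopted by fastforce
  then show ?case using Cons.IH[where s="fst (inform Q a x (s, acc))" and acc="snd (inform Q a x (s, acc))"]
    by simp
qed simp

lemma fold_new_in_acc:
  "fst (fold (inform Q a) xs (s, acc)) Z = Adopted \<Longrightarrow> s Z \<noteq> Adopted \<Longrightarrow>
   Z \<in> set (snd (fold (inform Q a) xs (s, acc)))"
proof (induction xs arbitrary: s acc)
  case (Cons x xs)
  obtain new where n: "snd (inform Q a x (s, acc)) = acc @ new"
    "\<forall>Z. Z \<in> set new \<longleftrightarrow> (fst (inform Q a x (s, acc)) Z = Adopted \<and> s Z \<noteq> Adopted)"
    using inform_acc by blast
  show ?case
  proof (cases "fst (inform Q a x (s, acc)) Z = Adopted")
    case True
    then have "Z \<in> set (snd (inform Q a x (s, acc)))" using n Cons.prems by auto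
    then show ?thesis using fold_acc_grow[of "snd (inform Q a x (s, acc))" Q a xs "fst (inform Q a x (s, acc))"]
      by auto
  next
    case False
    then show ?thesis using Cons.IH[where s="fst (inform Q a x (s, acc))" and acc="snd (inform Q a x (s, acc))"] Cons.prems
      by simp
  qed
qed simp


abbreviation st where "st Q SA SB w t \<equiv> fst (run Q SA SB w t)"
abbreviation nw where "nw Q SA SB w t \<equiv> snd (run Q SA SB w t)"

lemma run_Suc_st:
  "st Q SA SB w (Suc t) v = fst (fold (inform Q (w_alpha w v)) (events w (nw Q SA SB w t) v) (st Q SA SB w t v, []))"
  by (simp add: step_def case_prod_unfold Let_def)

lemma run_Suc_nw:
  "nw Q SA SB w (Suc t) v = snd (fold (inform Q (w_alpha w v)) (events w (nw Q SA SB w t) v) (st Q SA SB w t v, []))"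
  by (simp add: step_def case_prod_unfold Let_def)

declare run.simps(2)[simp del]

definition sd :: "'v set \<Rightarrow> 'v set \<Rightarrow> 'v \<Rightarrow> item \<Rightarrow> bool" where
  "sd SA SB v X \<longleftrightarrow> (X = IA \<and> v \<in> SA) \<or> (X = IB \<and> v \<in> SB)"

lemma st0: "st Q SA SB w 0 v X = (if sd SA SB v X then Adopted else Idle)"
  by (simp add: init_state_def sd_def)

lemma run_adopted_mono:
  assumes "st Q SA SB w t v Z = Adopted" "t \<le> t'"
  shows "st Q SA SB w t' v Z = Adopted"
  using assms(2,1)
proof (induction t' rule: dec_induct)
  case (step n)
  then show ?case by (simp add: run_Suc_st fold_mono_adopted)
qed simp

lemma run_nonidle_mono:
  assumes "st Q SA SB w t v Z \<noteq> Idle" "t \<le> t'"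
  shows "st Q SA SB w t' v Z \<noteq> Idle"
  using assms(2,1)
proof (induction t' rule: dec_induct)
  case (step n)
  then show ?case by (simp add: run_Suc_st fold_mono_nonidle)
qed simp

lemma nw_adopted: "Z \<in> set (nw Q SA SB w t v) \<Longrightarrow> st Q SA SB w t v Z = Adopted"
proof (cases t)
  case 0
  assume "Z \<in> set (nw Q SA SB w t v)"
  then show ?thesis using 0
    by (cases "w_coin w v") (auto simp: init_state_def split: if_splits)
next
  case (Suc n)
  assume "Z \<in> set (nw Q SA SB w t v)"
  then show ?thesis using Suc fold_acc_adopted[of "[]" "st Q SA SB w n v" Q "w_alpha w v" "events w (nw Q SA SB w n) v"]
    by (simp add: run_Suc_st run_Suc_nw)
qed

lemma new_in_nw0: "st Q SA SB w 0 v Z = Adopted \<Longrightarrow> Z \<in> set (nw Q SA SB w 0 v)"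
  by (cases Z; cases "w_coin w v") (auto simp: init_state_def split: if_splits)

lemma new_in_nw: "st Q SA SB w (Suc t) v Z = Adopted \<Longrightarrow> st Q SA SB w t v Z \<noteq> Adopted \<Longrightarrow>
   Z \<in> set (nw Q SA SB w (Suc t) v)"
  by (simp add: run_Suc_st run_Suc_nw fold_new_in_acc)

lemma events_mem: "Z \<in> set (events w n v) \<longleftrightarrow> (\<exists>u\<in>set (w_perm w v). w_live w (u, v) \<and> Z \<in> set (n u))"
  by (auto simp: events_def split: if_splits)

lemma history:
  assumes "st Q SA SB w t u Z = Adopted" "u \<in> set (w_perm w v)" "w_live w (u, v)"
  shows "st Q SA SB w (Suc t) v Z \<noteq> Idle"
  using assms(1)
proof (induction t)
  case 0
  then have "Z \<in> set (events w (nw Q SA SB w 0) v)"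
    using new_in_nw0 assms(2,3) events_mem by metis
  then show ?case unfolding run_Suc_st by (rule fold_informed)
next
  case (Suc t)
  show ?case
  proof (cases "st Q SA SB w t u Z = Adopted")
    case True
    then show ?thesis using Suc.IH run_nonidle_mono[of Q SA SB w "Suc t" v Z "Suc (Suc t)"] by simp
  next
    case False
    then have "Z \<in> set (events w (nw Q SA SB w (Suc t)) v)"
      using new_in_nw[OF Suc.prems] assms(2,3) events_mem by metis
    then show ?thesis unfolding run_Suc_st by (rule fold_informed)
  qed
qed

lemma became_nonidle:
  assumes "st Q SA SB w (Suc t) v Z \<noteq> Idle" "st Q SA SB w t v Z = Idle"
  shows "\<exists>u\<in>set (w_perm w v). w_live w (u, v) \<and> Z \<in> set (nw Q SA SB w t u)"
proof (rule ccontr)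
  assume "\<not> ?thesis"
  then have "Z \<notin> set (events w (nw Q SA SB w t) v)" using events_mem by metis
  then show False using assms fold_idle by (simp add: run_Suc_st)
qed

lemma run_inv:
  assumes "Qplus Q"
  shows "ninv Q (w_alpha w v) (sd SA SB v) (st Q SA SB w t v)"
proof (induction t)
  case 0
  then show ?case by (simp add: ninv_def init_state_def sd_def)
next
  case (Suc t)
  then show ?case by (simp add: run_Suc_st fold_inv assms)
qed


lemma node_adopt:
  assumes I: "ninv Q a sx s" and I': "ninv Q' a sx s'"
    and ni: "\<forall>Z. s Z \<noteq> Idle \<longrightarrow> s' Z \<noteq> Idle"
    and sd: "\<forall>Z. sx Z \<longrightarrow> s' Z = Adopted"
    and le0: "\<forall>Z. q0 Q Z \<le> q0 Q' Z" and le1: "\<forall>Z. q1 Q Z \<le> q1 Q' Z"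
    and qp: "Qplus Q'" and X: "s X = Adopted"
  shows "s' X = Adopted"
proof (rule ccontr)
  assume nX: "s' X \<noteq> Adopted"
  define Y where "Y = other X"
  have IX: "\<not> (s X = Suspended \<and> s Y = Adopted) \<and>
     (s X = Rejected \<longrightarrow> a X > q1 Q X) \<and>
     (s X = Suspended \<longrightarrow> a X > q0 Q X) \<and>
     (s X = Adopted \<longrightarrow> sx X \<or> a X \<le> q1 Q X) \<and>
     (s X = Adopted \<and> \<not> sx X \<and> a X > q0 Q X \<longrightarrow>
        s Y = Adopted \<and> (sx Y \<or> a Y \<le> q0 Q Y))"
    using I unfolding ninv_def Y_def by blast
  have IX': "\<not> (s' X = Suspended \<and> s' Y = Adopted) \<and>
     (s' X = Rejected \<longrightarrow> a X > q1 Q' X) \<and>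
     (s' X = Suspended \<longrightarrow> a X > q0 Q' X)"
    using I' unfolding ninv_def Y_def by blast
  have IY': "(s' Y = Rejected \<longrightarrow> a Y > q1 Q' Y) \<and>
     (s' Y = Suspended \<longrightarrow> a Y > q0 Q' Y)"
    using I' unfolding ninv_def by blast
  have nsx: "\<not> sx X" using sd nX by blast
  have a1: "a X \<le> q1 Q X" using IX X nsx by blast
  have "s' X \<noteq> Idle" using ni X by auto
  moreover have "s' X \<noteq> Rejected"
  proof
    assume "s' X = Rejected"
    then have "a X > q1 Q' X" using IX' by blast
    with a1 le1[rule_format, of X] show False by linarith
  qed
  ultimately have susp: "s' X = Suspended" using nX by (cases "s' X") auto
  then have "a X > q0 Q' X" using IX' by blast
  then have "a X > q0 Q X" using le0[rule_format, of X] by linarith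
  then have Yad: "s Y = Adopted" and Yc: "sx Y \<or> a Y \<le> q0 Q Y" using IX X nsx by blast+
  have nY: "s' Y \<noteq> Adopted" using IX' susp by blast
  have "a Y \<le> q0 Q Y" using Yc sd nY by blast
  then have aY: "a Y \<le> q0 Q' Y" using le0[rule_format, of Y] by linarith
  have "q0 Q' Y \<le> q1 Q' Y" using q01[OF qp] .
  moreover have "s' Y \<noteq> Idle" using ni Yad by auto
  ultimately show False using nY IY' aY by (cases "s' Y") auto
qed

lemma coupling_nonidle:
  assumes qp: "Qplus Q" "Qplus Q'"
    and le0: "\<forall>Z. q0 Q Z \<le> q0 Q' Z" and le1: "\<forall>Z. q1 Q Z \<le> q1 Q' Z"
  shows "\<forall>v Z. st Q SA SB w t v Z \<noteq> Idle \<longrightarrow> st Q' SA SB w t v Z \<noteq> Idle"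
proof (induction t)
  case 0
  then show ?case by (simp add: init_state_def)
next
  case (Suc t)
  have adopt: "st Q' SA SB w t u Z = Adopted" if "st Q SA SB w t u Z = Adopted" for u Z
  proof (rule node_adopt[OF run_inv[OF qp(1)] run_inv[OF qp(2)] _ _ le0 le1 qp(2) that])
    show "\<forall>Z. st Q SA SB w t u Z \<noteq> Idle \<longrightarrow> st Q' SA SB w t u Z \<noteq> Idle" using Suc by blast
    show "\<forall>Z. sd SA SB u Z \<longrightarrow> st Q' SA SB w t u Z = Adopted"
      using run_adopted_mono[of Q' SA SB w 0 u _ t] st0[of Q' SA SB w u] by auto
  qed
  show ?case
  proof (intro allI impI)
    fix v Z assume h: "st Q SA SB w (Suc t) v Z \<noteq> Idle"
    show "st Q' SA SB w (Suc t) v Z \<noteq> Idle"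
    proof (cases "st Q SA SB w t v Z = Idle")
      case False
      then show ?thesis using Suc run_nonidle_mono[of Q' SA SB w t v Z "Suc t"] by auto
    next
      case True
      then obtain u where u: "u \<in> set (w_perm w v)" "w_live w (u, v)" "Z \<in> set (nw Q SA SB w t u)"
        using became_nonidle[OF h] by blast
      have "st Q' SA SB w t u Z = Adopted" using adopt nw_adopted[OF u(3)] by blast
      then show ?thesis using history[OF _ u(1) u(2)] by blast
    qed
  qed
qed

lemma coupling:
  assumes qp: "Qplus Q" "Qplus Q'"
    and le0: "\<forall>Z. q0 Q Z \<le> q0 Q' Z" and le1: "\<forall>Z. q1 Q Z \<le> q1 Q' Z"
  shows "adoptedA Q SA SB w \<subseteq> adoptedA Q' SA SB w"
proof
  fix v assume "v \<in> adoptedA Q SA SB w"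
  then obtain t where t: "st Q SA SB w t v IA = Adopted" by (auto simp: adoptedA_def)
  have "st Q' SA SB w t v IA = Adopted"
  proof (rule node_adopt[OF run_inv[OF qp(1)] run_inv[OF qp(2)] _ _ le0 le1 qp(2) t])
    show "\<forall>Z. st Q SA SB w t v Z \<noteq> Idle \<longrightarrow> st Q' SA SB w t v Z \<noteq> Idle"
      using coupling_nonidle[OF assms, where SA=SA and SB=SB and w=w and t=t] by blast
    show "\<forall>Z. sd SA SB v Z \<longrightarrow> st Q' SA SB w t v Z = Adopted"
      using run_adopted_mono[of Q' SA SB w 0 v _ t] st0[of Q' SA SB w v] by auto
  qed
  then show "v \<in> adoptedA Q' SA SB w" by (auto simp: adoptedA_def)
qed


lemma inform_cong:
  assumes "\<forall>X. (a X \<le> q0 Q X \<longleftrightarrow> b X \<le> q0 Q X) \<and> (a X \<le> q1 Q X \<longleftrightarrow> b X \<le> q1 Q X)"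
  shows "inform Q a = inform Q b"
proof (intro ext)
  fix X :: item and sa :: nstate
  obtain s acc where sa: "sa = (s, acc)" by (cases sa)
  have e: "\<And>Y. (a Y \<le> q0 Q Y) = (b Y \<le> q0 Q Y)" "\<And>Y. (a Y \<le> q1 Q Y) = (b Y \<le> q1 Q Y)"
    using assms by blast+
  show "inform Q a X sa = inform Q b X sa"
    unfolding sa inform_def Let_def e by simp
qed

lemma run_cong:
  assumes "w_live w = w_live w'" "w_perm w = w_perm w'" "w_coin w = w_coin w'"
    "\<forall>v. inform Q (w_alpha w v) = inform Q (w_alpha w' v)"
  shows "run Q SA SB w t = run Q SA SB w' t"
proof (induction t)
  case 0
  have "init_state SA SB w = init_state SA SB w'" unfolding init_state_def assms(3) by (rule refl)
  then show ?case by simp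
next
  case (Suc t)
  have ev: "events w = events w'" using assms by (intro ext) (simp add: events_def)
  show ?case using Suc assms ev by (simp add: run.simps(2) step_def)
qed

definition canon :: "gaps \<Rightarrow> item \<Rightarrow> bool \<Rightarrow> bool \<Rightarrow> real" where
  "canon Q X b0 b1 = (if b0 then q0 Q X else if b1 then q1 Q X else q1 Q X + 1)"

definition wkey :: "gaps \<Rightarrow> 'v world \<Rightarrow> ('v \<Rightarrow> bool \<times> bool \<times> bool \<times> bool) \<times> ('v \<times> 'v \<Rightarrow> bool) \<times> ('v \<Rightarrow> 'v list) \<times> ('v \<Rightarrow> item)" where
  "wkey Q w = ((\<lambda>v. (w_alpha w v IA \<le> q0 Q IA, w_alpha w v IA \<le> q1 Q IA,
                      w_alpha w v IB \<le> q0 Q IB, w_alpha w v IB \<le> q1 Q IB)),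
               w_live w, w_perm w, w_coin w)"

definition rebuild :: "gaps \<Rightarrow> ('v \<Rightarrow> bool \<times> bool \<times> bool \<times> bool) \<times> ('v \<times> 'v \<Rightarrow> bool) \<times> ('v \<Rightarrow> 'v list) \<times> ('v \<Rightarrow> item) \<Rightarrow> 'v world" where
  "rebuild Q k = (case k of (c, l, pm, cn) \<Rightarrow>
     ((\<lambda>v. case c v of (a0, a1, b0, b1) \<Rightarrow> canon Q IA a0 a1),
      (\<lambda>v. case c v of (a0, a1, b0, b1) \<Rightarrow> canon Q IB b0 b1), l, pm, cn))"

lemma canon_le:
  assumes "q0 Q X \<le> q1 Q X"
  shows "(canon Q X (x \<le> q0 Q X) (x \<le> q1 Q X) \<le> q0 Q X \<longleftrightarrow> x \<le> q0 Q X)"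
    "(canon Q X (x \<le> q0 Q X) (x \<le> q1 Q X) \<le> q1 Q X \<longleftrightarrow> x \<le> q1 Q X)"
  using assms by (auto simp: canon_def)

lemma rebuild_alpha:
  "w_alpha (rebuild Q (wkey Q w)) v X = canon Q X (w_alpha w v X \<le> q0 Q X) (w_alpha w v X \<le> q1 Q X)"
  by (cases X) (simp_all add: w_alpha_def rebuild_def wkey_def)

lemma adoptedA_rebuild:
  assumes "Qplus Q"
  shows "adoptedA Q SA SB (rebuild Q (wkey Q w)) = adoptedA Q SA SB w"
proof -
  have "run Q SA SB (rebuild Q (wkey Q w)) t = run Q SA SB w t" for t
  proof (rule run_cong)
    show "w_live (rebuild Q (wkey Q w)) = w_live w" "w_perm (rebuild Q (wkey Q w)) = w_perm w"
      "w_coin (rebuild Q (wkey Q w)) = w_coin w"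
      by (simp_all add: rebuild_def wkey_def w_live_def w_perm_def w_coin_def)
    show "\<forall>v. inform Q (w_alpha (rebuild Q (wkey Q w)) v) = inform Q (w_alpha w v)"
      using canon_le[OF q01[OF assms]] by (intro allI inform_cong) (simp add: rebuild_alpha)
  qed
  then show ?thesis by (simp add: adoptedA_def)
qed

instance item :: countable by countable_datatype

lemma wkey_eq: "wkey Q w = k \<longleftrightarrow>
   (\<forall>v\<in>UNIV. (fst w v \<le> q0 Q IA \<longleftrightarrow> fst (fst k v)) \<and> (fst w v \<le> q1 Q IA \<longleftrightarrow> fst (snd (fst k v))) \<and>
        (fst (snd w) v \<le> q0 Q IB \<longleftrightarrow> fst (snd (snd (fst k v)))) \<and> (fst (snd w) v \<le> q1 Q IB \<longleftrightarrow> snd (snd (snd (fst k v))))) \<and>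
   (\<forall>e\<in>UNIV. fst (snd (snd w)) e = fst (snd k) e) \<and> (\<forall>v\<in>UNIV. fst (snd (snd (snd w))) v = fst (snd (snd k)) v) \<and>
   (\<forall>v\<in>UNIV. snd (snd (snd (snd w))) v = snd (snd (snd k)) v)"
  unfolding wkey_def w_alpha_def w_live_def w_perm_def w_coin_def by (auto simp: fun_eq_iff prod_eq_iff)

lemma wkey_meas:
  fixes E :: "('v::finite \<times> 'v) set"
  shows "wkey Q \<in> measurable (world_measure E p) (count_space UNIV)"
proof -
  have "Measurable.pred (world_measure E p) (\<lambda>w. wkey Q w = k)" for k
    unfolding wkey_eq world_measure_def
    by measurable
  then show ?thesis
    by (subst measurable_count_space_eq2_countable) (auto simp: pred_def vimage_def Int_def conj_commute)
qed


lemma world_prob: "prob_space (world_measure E p)"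
proof -
  have u: "prob_space (uniform_measure lborel {0..1::real})"
    by (rule prob_space_uniform_measure) auto
  show ?thesis unfolding world_measure_def
    by (intro prob_space_pair prob_space_PiM u prob_space_measure_pmf)
qed

lemma f_meas:
  fixes E :: "('v::finite \<times> 'v) set"
  assumes "Qplus Q"
  shows "(\<lambda>w. real (card (adoptedA Q SA SB w))) \<in> borel_measurable (world_measure E p)"
proof -
  have "(\<lambda>w. (\<lambda>k x. real (card (adoptedA Q SA SB (rebuild Q k)))) (wkey Q w) w) \<in> borel_measurable (world_measure E p)"
    by (rule measurable_compose_countable'[where f="\<lambda>k x. real (card (adoptedA Q SA SB (rebuild Q k)))" and g="wkey Q", OF _ wkey_meas]) (auto intro: countableI_type)
  then show ?thesis by (simp add: adoptedA_rebuild[OF assms])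
qed

lemma f_int:
  fixes E :: "('v::finite \<times> 'v) set"
  assumes "Qplus Q"
  shows "integrable (world_measure E p) (\<lambda>w. real (card (adoptedA Q SA SB w)))"
proof -
  interpret prob_space "world_measure E p" by (rule world_prob)
  show ?thesis
  proof (rule integrable_const_bound[where B="real (card (UNIV :: 'v set))"])
    show "AE x in world_measure E p. norm (real (card (adoptedA Q SA SB x))) \<le> real (card (UNIV :: 'v set))"
      by (intro AE_I2) (simp add: card_mono)
    show "(\<lambda>w. real (card (adoptedA Q SA SB w))) \<in> borel_measurable (world_measure E p)"
      by (rule f_meas[OF assms])
  qed
qed

theorem theorem10:
  fixes E :: "('v::finite \<times> 'v) set" and p :: "'v \<times> 'v \<Rightarrow> real"
    and SA SB :: "'v set" and Q Q' :: gaps and i :: gap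
  assumes "\<forall>e\<in>E. 0 \<le> p e \<and> p e \<le> 1"
    and "valid_gaps Q" and "valid_gaps Q'"
    and "Qplus Q" and "Qplus Q'"
    and "\<forall>j. j \<noteq> i \<longrightarrow> Q' j = Q j"
    and "Q i \<le> Q' i"
  shows "sigmaA E p Q SA SB \<le> sigmaA E p Q' SA SB"
proof -
  have le: "Q j \<le> Q' j" for j using assms(6,7) by (cases "j = i") auto
  have le0: "\<forall>Z. q0 Q Z \<le> q0 Q' Z" using le by (metis q0.simps item.exhaust)
  have le1: "\<forall>Z. q1 Q Z \<le> q1 Q' Z" using le by (metis q1.simps item.exhaust)
  have sub: "adoptedA Q SA SB w \<subseteq> adoptedA Q' SA SB w" for w
    by (rule coupling[OF assms(4,5) le0 le1])
  show ?thesis unfolding sigmaA_def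
    by (rule integral_mono[OF f_int[OF assms(4)] f_int[OF assms(5)]]) (simp add: card_mono sub)
qed

end
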